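(* Let $z,w>0$ be such that $\mathrm{DAG}(z,w)<\infty$, let $G=(V,E)$ be a random labelled DAG drawn from the Boltzmann model with parameters $(z,w)$, and condition on its root-layering being a given ordered partition $(V_1,\dots,V_k)$. Then, conditionally, the edge set $E$ has the following distribution: there are no edges from $V_j$ to $V_i$ for $i\le j$; for every pair $(x,y)$ with $x\in V_i$, $y\in V_j$ and $j\ge i+2$, the edge $(x,y)$ is present with probability $\frac{w}{1+w}$; for every $i\in\{1,\dots,k-1\}$ and every $y\in V_{i+1}$, the set of in-neighbours of $y$ in $V_i$ is distributed as a random subset of $V_i$ obtained by including each element independently with probability $\frac{w}{1+w}$, conditioned on being non-empty (equivalently, such subsets are redrawn until at least one edge is present); and all these random choices are mutually independent.
   Context: A labelled DAG with $n$ vertices is a directed acyclic graph on vertex set $\{1,\dots,n\}$; $v(G)$, $e(G)$ denote its numbers of vertices and edges; a source is a vertex of in-degree $0$. $\mathrm{DAG}(z,w)=\sum_G \frac{z^{v(G)}w^{e(G)}}{(1+w)^{\binom{v(G)}{2}}v(G)!}$ over all labelled DAGs. The Boltzmann model with parameters $(z,w)$ assigns probability $\frac{z^{v(G)}w^{e(G)}}{(1+w)^{\binom{v(G)}{2}}v(G)!\,\mathrm{DAG}(z,w)}$ to each labelled DAG $G$. The root-layering of a DAG $G=(V,E)$ is the ordered partition $(V_1,\dots,V_k)$ of $V$ where $V_i$ is the set of sources of the graph obtained from $G$ by deleting $V_1\cup\dots\cup V_{i-1}$. *)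

theory Defs
  imports "HOL-Analysis.Analysis"
begin

definition labelled_dags :: "(nat \<times> (nat \<times> nat) set) set" where
  "labelled_dags = {(n, E). E \<subseteq> {1..n} \<times> {1..n} \<and> acyclic E}"

definition dag_weight :: "real \<Rightarrow> real \<Rightarrow> nat \<times> (nat \<times> nat) set \<Rightarrow> real" where
  "dag_weight z w G = z ^ fst G * w ^ card (snd G) / ((1 + w) ^ (fst G choose 2) * fact (fst G))"

definition DAG_finite :: "real \<Rightarrow> real \<Rightarrow> bool" where
  "DAG_finite z w \<longleftrightarrow> dag_weight z w summable_on labelled_dags"

definition DAG_gf :: "real \<Rightarrow> real \<Rightarrow> real" where
  "DAG_gf z w = infsum (dag_weight z w) labelled_dags"

definition boltzmann_prob :: "real \<Rightarrow> real \<Rightarrow> nat \<times> (nat \<times> nat) set \<Rightarrow> real" where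
  "boltzmann_prob z w G = (if G \<in> labelled_dags then dag_weight z w G / DAG_gf z w else 0)"

definition boltzmann_event :: "real \<Rightarrow> real \<Rightarrow> (nat \<times> (nat \<times> nat) set \<Rightarrow> bool) \<Rightarrow> real" where
  "boltzmann_event z w P = infsum (boltzmann_prob z w) {G \<in> labelled_dags. P G}"

definition sources_in :: "(nat \<times> nat) set \<Rightarrow> nat set \<Rightarrow> nat set" where
  "sources_in E U = {v \<in> U. \<forall>u \<in> U. (u, v) \<notin> E}"

text \<open>Root-layering, computed with fuel m (fuel n suffices for a DAG on n vertices,
  since each step removes at least one vertex).\<close>

fun layering_fuel :: "(nat \<times> nat) set \<Rightarrow> nat set \<Rightarrow> nat \<Rightarrow> nat set list" where
  "layering_fuel E U 0 = []"
| "layering_fuel E U (Suc m) =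
     (if U = {} then [] else sources_in E U # layering_fuel E (U - sources_in E U) m)"

definition root_layering :: "nat \<times> (nat \<times> nat) set \<Rightarrow> nat set list" where
  "root_layering G = layering_fuel (snd G) {1..fst G} (fst G)"

definition ordered_partition :: "nat \<Rightarrow> nat set list \<Rightarrow> bool" where
  "ordered_partition n L \<longleftrightarrow>
     (\<forall>i < length L. L ! i \<noteq> {}) \<and>
     (\<forall>i < length L. \<forall>j < length L. i \<noteq> j \<longrightarrow> L ! i \<inter> L ! j = {}) \<and>
     \<Union> (set L) = {1..n}"

text \<open>Probability of edge set E under the described law (given layering L, p = w/(1+w)):
  no edge from V_j to V_i for i \<le> j; independent Bernoulli(p) edges from V_i to V_j, j \<ge> i+2;
  for y in V_(i+1) the in-neighbourhood in V_i is an independent Bernoulli(p) subset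
  conditioned to be nonempty. (Indices 0-based.)\<close>

definition pair_factor :: "real \<Rightarrow> (nat \<times> nat) set \<Rightarrow> nat \<Rightarrow> nat \<Rightarrow> nat \<Rightarrow> nat \<Rightarrow> real" where
  "pair_factor p E i j x y =
     (if j \<le> i then (if (x, y) \<in> E then 0 else 1)
      else if i + 2 \<le> j then (if (x, y) \<in> E then p else 1 - p)
      else 1)"

definition inneighbour_factor :: "real \<Rightarrow> (nat \<times> nat) set \<Rightarrow> nat set \<Rightarrow> nat \<Rightarrow> real" where
  "inneighbour_factor p E A y =
     (let S = {x \<in> A. (x, y) \<in> E} in
      if S = {} then 0
      else p ^ card S * (1 - p) ^ (card A - card S) / (1 - (1 - p) ^ card A))"

definition layered_edge_law :: "real \<Rightarrow> nat set list \<Rightarrow> (nat \<times> nat) set \<Rightarrow> real" where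
  "layered_edge_law p L E =
     (\<Prod>i < length L. \<Prod>j < length L. \<Prod>x \<in> L ! i. \<Prod>y \<in> L ! j. pair_factor p E i j x y) *
     (\<Prod>i < length L - 1. \<Prod>y \<in> L ! (i + 1). inneighbour_factor p E (L ! i) y)"

end

theory Submission
  imports Defs
begin

lemma group_sum:
  fixes h :: "'g \<Rightarrow> 'a set \<Rightarrow> real"
  assumes "finite I" "\<And>g. g \<in> I \<Longrightarrow> finite (A g)" "disjoint_family_on A I"
  shows "(\<Sum>E\<in>Pow (\<Union>g\<in>I. A g). \<Prod>g\<in>I. h g (E \<inter> A g)) = (\<Prod>g\<in>I. \<Sum>T\<in>Pow (A g). h g T)"
  using assms
proof (induction I rule: finite_induct)
  case empty
  then show ?case by simp
next
  case (insert a I)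
  define U where "U = (\<Union>g\<in>I. A g)"
  have dI: "disjoint_family_on A I" using insert.prems(2) by (auto simp: disjoint_family_on_def)
  have IH: "(\<Sum>E\<in>Pow U. \<Prod>g\<in>I. h g (E \<inter> A g)) = (\<Prod>g\<in>I. \<Sum>T\<in>Pow (A g). h g T)"
    using insert.IH insert.prems dI unfolding U_def by auto
  have disj: "A a \<inter> U = {}" using insert.prems(2) insert.hyps(2) unfolding U_def disjoint_family_on_def by fastforce
  have fa: "finite (A a)" using insert.prems by auto
  have fU: "finite U" using insert.prems insert.hyps unfolding U_def by auto
  have un: "(\<Union>g\<in>insert a I. A g) = A a \<union> U" unfolding U_def by auto
  have inj: "inj_on (\<lambda>(S,T). S \<union> T) (Pow (A a) \<times> Pow U)"
    using disj by (auto simp: inj_on_def) blast+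
  have img: "Pow (A a \<union> U) = (\<lambda>(S,T). S \<union> T) ` (Pow (A a) \<times> Pow U)"
  proof
    show "Pow (A a \<union> U) \<subseteq> (\<lambda>(S,T). S \<union> T) ` (Pow (A a) \<times> Pow U)"
    proof
      fix E assume "E \<in> Pow (A a \<union> U)"
      then have "E = (\<lambda>(S,T). S \<union> T) (E \<inter> A a, E \<inter> U)" by auto
      moreover have "(E \<inter> A a, E \<inter> U) \<in> Pow (A a) \<times> Pow U" by auto
      ultimately show "E \<in> (\<lambda>(S,T). S \<union> T) ` (Pow (A a) \<times> Pow U)" by blast
    qed
  qed auto
  have key: "(\<Prod>g\<in>insert a I. h g ((S \<union> T) \<inter> A g)) = h a S * (\<Prod>g\<in>I. h g (T \<inter> A g))"
    if "S \<subseteq> A a" "T \<subseteq> U" for S T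
  proof -
    have "(S \<union> T) \<inter> A a = S" using that disj by blast
    moreover have "(S \<union> T) \<inter> A g = T \<inter> A g" if "g \<in> I" for g
      using \<open>S \<subseteq> A a\<close> disj \<open>g \<in> I\<close> unfolding U_def by blast
    ultimately show ?thesis using insert.hyps by simp
  qed
  have "(\<Sum>E\<in>Pow (\<Union>g\<in>insert a I. A g). \<Prod>g\<in>insert a I. h g (E \<inter> A g))
      = (\<Sum>E\<in>Pow (A a \<union> U). \<Prod>g\<in>insert a I. h g (E \<inter> A g))" by (simp only: un)
  also have "\<dots> = (\<Sum>(S,T)\<in>Pow (A a) \<times> Pow U. \<Prod>g\<in>insert a I. h g ((S \<union> T) \<inter> A g))"
    unfolding img by (subst sum.reindex[OF inj]) (simp add: case_prod_unfold)
  also have "\<dots> = (\<Sum>(S,T)\<in>Pow (A a) \<times> Pow U. h a S * (\<Prod>g\<in>I. h g (T \<inter> A g)))"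
    by (rule sum.cong) (auto simp: key)
  also have "\<dots> = (\<Sum>S\<in>Pow (A a). \<Sum>T\<in>Pow U. h a S * (\<Prod>g\<in>I. h g (T \<inter> A g)))"
    by (simp add: sum.cartesian_product)
  also have "\<dots> = (\<Sum>S\<in>Pow (A a). h a S) * (\<Sum>T\<in>Pow U. (\<Prod>g\<in>I. h g (T \<inter> A g)))"
    by (simp add: sum_product)
  also have "\<dots> = (\<Prod>g\<in>insert a I. \<Sum>T\<in>Pow (A g). h g T)"
    using IH insert.hyps by simp
  finally show ?case .
qed
lemma group_prod:
  fixes c :: "'g \<Rightarrow> real"
  assumes "finite I" "\<And>g. g \<in> I \<Longrightarrow> finite (A g)" "disjoint_family_on A I"
    and "E \<subseteq> (\<Union>g\<in>I. A g)"
  shows "(\<Prod>g\<in>I. (if P g (E \<inter> A g) then w ^ card (E \<inter> A g) * c g else 0))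
       = (if \<forall>g\<in>I. P g (E \<inter> A g) then w ^ card E * (\<Prod>g\<in>I. c g) else 0)"
proof (cases "\<forall>g\<in>I. P g (E \<inter> A g)")
  case True
  have "(\<Prod>g\<in>I. (if P g (E \<inter> A g) then w ^ card (E \<inter> A g) * c g else 0))
      = (\<Prod>g\<in>I. w ^ card (E \<inter> A g) * c g)" using True by (intro prod.cong) auto
  also have "\<dots> = w ^ (\<Sum>g\<in>I. card (E \<inter> A g)) * (\<Prod>g\<in>I. c g)"
    by (simp add: prod.distrib power_sum)
  also have "(\<Sum>g\<in>I. card (E \<inter> A g)) = card (\<Union>g\<in>I. E \<inter> A g)"
    using assms(1,2,3) by (subst card_UN_disjoint) (auto simp: disjoint_family_on_def)
  also have "(\<Union>g\<in>I. E \<inter> A g) = E" using assms(4) by blast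
  finally show ?thesis using True by simp
next
  case False
  then obtain g where "g \<in> I" "\<not> P g (E \<inter> A g)" by blast
  then show ?thesis using False assms(1) by (subst prod_zero) auto
qed

definition layer_ok :: "(nat \<times> nat) set \<Rightarrow> nat set list \<Rightarrow> bool" where
  "layer_ok E L \<longleftrightarrow>
     (\<forall>i<length L. \<forall>j<length L. i \<le> j \<longrightarrow> (\<forall>y\<in>L!i. \<forall>x\<in>L!j. (x,y) \<notin> E)) \<and>
     (\<forall>i. Suc i < length L \<longrightarrow> (\<forall>y\<in>L!Suc i. \<exists>x\<in>L!i. (x,y) \<in> E))"

lemma sources_sub: "sources_in E U \<subseteq> U" by (auto simp: sources_in_def)

lemma lay_sub: "\<Union> (set (layering_fuel E U m)) \<subseteq> U"
proof (induction m arbitrary: U)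
  case 0 then show ?case by simp
next
  case (Suc m)
  then show ?case using Suc.IH[of "U - sources_in E U"] sources_sub[of E U] by auto
qed

lemma lay_props:
  "layering_fuel E U m = L' \<Longrightarrow> \<Union> (set L') = U \<Longrightarrow> layer_ok E L'"
proof (induction m arbitrary: U L')
  case 0 then show ?case by (auto simp: layer_ok_def)
next
  case (Suc m)
  show ?case
  proof (cases "U = {}")
    case True then show ?thesis using Suc.prems by (auto simp: layer_ok_def)
  next
    case False
    define S where "S = sources_in E U"
    define L'' where "L'' = layering_fuel E (U - S) m"
    have L': "L' = S # L''" using Suc.prems(1) False unfolding S_def L''_def by simp
    have "\<Union> (set L'') \<subseteq> U - S" unfolding L''_def by (rule lay_sub)
    moreover have "S \<union> \<Union> (set L'') = U" using Suc.prems(2) L' by simp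
    ultimately have uL: "\<Union> (set L'') = U - S" using sources_sub[of E U] unfolding S_def by blast
    have IH: "layer_ok E L''" using Suc.IH[OF L''_def[symmetric] uL] .
    have a: "\<forall>i<length L'. \<forall>j<length L'. i \<le> j \<longrightarrow> (\<forall>y\<in>L'!i. \<forall>x\<in>L'!j. (x,y) \<notin> E)"
    proof (intro allI impI ballI)
      fix i j y x assume h: "i < length L'" "j < length L'" "i \<le> j" "y \<in> L'!i" "x \<in> L'!j"
      show "(x,y) \<notin> E"
      proof (cases i)
        case 0
        then have "y \<in> S" using h L' by simp
        moreover have "x \<in> U" using h(2,5) Suc.prems(2) by (auto simp: set_conv_nth)
        ultimately show ?thesis unfolding S_def sources_in_def by auto
      next
        case (Suc i')
        then obtain j' where j': "j = Suc j'" using h(3) by (cases j) auto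
        have "i' < length L''" "j' < length L''" "i' \<le> j'" "y \<in> L''!i'" "x \<in> L''!j'"
          using h Suc j' L' by auto
        then show ?thesis using IH unfolding layer_ok_def by blast
      qed
    qed
    have b: "\<forall>i. Suc i < length L' \<longrightarrow> (\<forall>y\<in>L'!Suc i. \<exists>x\<in>L'!i. (x,y) \<in> E)"
    proof (intro allI impI ballI)
      fix i y assume h: "Suc i < length L'" "y \<in> L'!Suc i"
      show "\<exists>x\<in>L'!i. (x,y) \<in> E"
      proof (cases i)
        case 0
        then have yL: "y \<in> L''!0" "0 < length L''" using h L' by auto
        then have "y \<in> U - S" using uL by (auto simp: set_conv_nth)
        then obtain u where u: "u \<in> U" "(u,y) \<in> E" unfolding S_def sources_in_def by auto
        have "u \<in> S"
        proof (rule ccontr)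
          assume "u \<notin> S"
          then have "u \<in> \<Union> (set L'')" using uL u by blast
          then obtain j where "j < length L''" "u \<in> L''!j" by (auto simp: set_conv_nth)
          then show False using IH yL u unfolding layer_ok_def by auto
        qed
        then show ?thesis using 0 L' u by auto
      next
        case (Suc i')
        then show ?thesis using IH h L' unfolding layer_ok_def by auto
      qed
    qed
    show ?thesis using a b unfolding layer_ok_def by blast
  qed
qed

lemma lay_build:
  assumes ok: "layer_ok E L" and ne: "\<forall>i<length L. L!i \<noteq> {}"
    and dj: "\<forall>i<length L. \<forall>j<length L. i \<noteq> j \<longrightarrow> L!i \<inter> L!j = {}"
  shows "s \<le> length L \<Longrightarrow> length L - s \<le> m \<Longrightarrow>
         layering_fuel E (\<Union>i\<in>{s..<length L}. L!i) m = drop s L"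
proof (induction m arbitrary: s)
  case 0 then show ?case by simp
next
  case (Suc m)
  show ?case
  proof (cases "s = length L")
    case True then show ?thesis by simp
  next
    case False
    then have sl: "s < length L" using Suc.prems by simp
    define U where "U = (\<Union>i\<in>{s..<length L}. L!i)"
    have Une: "U \<noteq> {}" using ne sl unfolding U_def by auto
    have src: "sources_in E U = L!s"
    proof
      show "sources_in E U \<subseteq> L!s"
      proof
        fix v assume v: "v \<in> sources_in E U"
        then obtain t where t: "s \<le> t" "t < length L" "v \<in> L!t" unfolding sources_in_def U_def by auto
        show "v \<in> L!s"
        proof (cases "t = s")
          case True then show ?thesis using t by simp
        next
          case False
          then obtain t' where t': "t = Suc t'" "s \<le> t'" using t by (cases t) auto
          then obtain x where "x \<in> L!t'" "(x,v) \<in> E" using ok t(2,3) t'(1) unfolding layer_ok_def by blast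
          moreover have "x \<in> U" using \<open>x \<in> L!t'\<close> t t' unfolding U_def by auto
          ultimately show ?thesis using v unfolding sources_in_def by auto
        qed
      qed
    next
      show "L!s \<subseteq> sources_in E U"
      proof
        fix v assume v: "v \<in> L!s"
        have "\<forall>u\<in>U. (u,v) \<notin> E"
        proof
          fix u assume "u \<in> U"
          then obtain t where "s \<le> t" "t < length L" "u \<in> L!t" unfolding U_def by auto
          then show "(u,v) \<notin> E" using ok v sl unfolding layer_ok_def by blast
        qed
        moreover have "v \<in> U" using v sl unfolding U_def by auto
        ultimately show "v \<in> sources_in E U" unfolding sources_in_def by auto
      qed
    qed
    have diff: "U - L!s = (\<Union>i\<in>{Suc s..<length L}. L!i)"
    proof
      show "U - L!s \<subseteq> (\<Union>i\<in>{Suc s..<length L}. L!i)"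
        unfolding U_def using le_eq_less_or_eq by fastforce
    next
      show "(\<Union>i\<in>{Suc s..<length L}. L!i) \<subseteq> U - L!s"
        unfolding U_def using dj sl by fastforce
    qed
    have "layering_fuel E U (Suc m) = L!s # layering_fuel E (U - L!s) m"
      using Une src by simp
    also have "layering_fuel E (U - L!s) m = drop (Suc s) L"
      unfolding diff using Suc.IH[of "Suc s"] Suc.prems sl by simp
    also have "L!s # drop (Suc s) L = drop s L" using sl by (simp add: Cons_nth_drop_Suc)
    finally show ?thesis unfolding U_def .
  qed
qed

lemma lay_cover:
  assumes "finite E" "acyclic E"
  shows "finite U \<Longrightarrow> card U \<le> m \<Longrightarrow> \<Union> (set (layering_fuel E U m)) = U"
proof (induction m arbitrary: U)
  case 0 then show ?case by simp
next
  case (Suc m)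
  show ?case
  proof (cases "U = {}")
    case True then show ?thesis by simp
  next
    case False
    have wf: "wf E" using assms by (rule finite_acyclic_wf)
    obtain z where z: "z \<in> U" "\<forall>y. (y,z) \<in> E \<longrightarrow> y \<notin> U"
      using False wf unfolding wf_eq_minimal by blast
    then have zS: "z \<in> sources_in E U" unfolding sources_in_def by auto
    have "card (U - sources_in E U) < card U"
      using zS z(1) Suc.prems(1) by (intro psubset_card_mono) auto
    then have "\<Union> (set (layering_fuel E (U - sources_in E U) m)) = U - sources_in E U"
      using Suc.IH[of "U - sources_in E U"] Suc.prems by simp
    then show ?thesis using False sources_sub[of E U] by auto
  qed
qed
definition grp :: "nat set list \<Rightarrow> (nat \<times> nat \<times> nat) set" where
  "grp L = (SIGMA i:{..<length L}. SIGMA j:{..<length L}. L!j)"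

definition blk :: "nat set list \<Rightarrow> nat \<times> nat \<times> nat \<Rightarrow> (nat \<times> nat) set" where
  "blk L g = L ! fst g \<times> {snd (snd g)}"

definition cnd :: "nat \<times> nat \<times> nat \<Rightarrow> (nat \<times> nat) set \<Rightarrow> bool" where
  "cnd g T \<longleftrightarrow> (fst (snd g) \<le> fst g \<longrightarrow> T = {}) \<and> (fst (snd g) = Suc (fst g) \<longrightarrow> T \<noteq> {})"

definition hh :: "real \<Rightarrow> nat set list \<Rightarrow> nat \<times> nat \<times> nat \<Rightarrow> (nat \<times> nat) set \<Rightarrow> real" where
  "hh p L g T = (case g of (i,j,y) \<Rightarrow> (\<Prod>x\<in>L!i. pair_factor p T i j x y) *
      (if j = Suc i then inneighbour_factor p T (L!i) y else 1))"

definition cc :: "real \<Rightarrow> nat set list \<Rightarrow> nat \<times> nat \<times> nat \<Rightarrow> real" where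
  "cc w L g = (case g of (i,j,y) \<Rightarrow> if j \<le> i then 1
      else if j = Suc i then (1/(1+w))^card (L!i) / (1 - (1/(1+w))^card (L!i))
      else (1/(1+w))^card (L!i))"

context
  fixes n :: nat and L :: "nat set list"
  assumes op: "ordered_partition n L"
begin

lemma op_set: "\<Union> (set L) = {1..n}"
  using op unfolding ordered_partition_def by blast

lemma op_sub: "i < length L \<Longrightarrow> L!i \<subseteq> {1..n}"
  using op_set nth_mem[of i L] by blast

lemma op_fin: "i < length L \<Longrightarrow> finite (L!i)"
  using op_sub finite_subset by blast

lemma op_ne: "i < length L \<Longrightarrow> L!i \<noteq> {}"
  using op unfolding ordered_partition_def by auto

lemma op_cover: "x \<in> {1..n} \<Longrightarrow> \<exists>i<length L. x \<in> L!i"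
proof -
  assume "x \<in> {1..n}"
  then obtain A where "A \<in> set L" "x \<in> A" using op_set by blast
  then show ?thesis by (auto simp: in_set_conv_nth)
qed

lemma op_uniq: "i < length L \<Longrightarrow> j < length L \<Longrightarrow> x \<in> L!i \<Longrightarrow> x \<in> L!j \<Longrightarrow> i = j"
  using op unfolding ordered_partition_def by blast

lemma op_dj: "\<forall>i<length L. \<forall>j<length L. i \<noteq> j \<longrightarrow> L!i \<inter> L!j = {}"
  using op unfolding ordered_partition_def by blast

lemma op_union: "(\<Union>i\<in>{0..<length L}. L!i) = {1..n}"
  using op_sub op_cover by fastforce

lemma op_len: "length L \<le> n"
proof -
  have "n = card (\<Union>i\<in>{0..<length L}. L!i)" using op_union by simp
  also have "\<dots> = (\<Sum>i\<in>{0..<length L}. card (L!i))"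
    using op_fin op_dj by (intro card_UN_disjoint) auto
  also have "\<dots> \<ge> (\<Sum>i\<in>{0..<length L}. 1)"
    using op_fin op_ne by (intro sum_mono) (simp add: Suc_leI card_gt_0_iff)
  finally show ?thesis by simp
qed

lemma grp_fin: "finite (grp L)"
  unfolding grp_def using op_fin by auto

lemma blk_fin: "g \<in> grp L \<Longrightarrow> finite (blk L g)"
  unfolding grp_def blk_def using op_fin by auto

lemma blk_un: "(\<Union>g\<in>grp L. blk L g) = {1..n} \<times> {1..n}"
proof
  show "(\<Union>g\<in>grp L. blk L g) \<subseteq> {1..n} \<times> {1..n}"
    unfolding grp_def blk_def using op_sub by fastforce
next
  show "{1..n} \<times> {1..n} \<subseteq> (\<Union>g\<in>grp L. blk L g)"
  proof
    fix q assume "q \<in> {1..n} \<times> {1..n}"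
    then obtain x y where q: "q = (x,y)" "x \<in> {1..n}" "y \<in> {1..n}" by auto
    obtain i where i: "i < length L" "x \<in> L!i" using op_cover q by blast
    obtain j where j: "j < length L" "y \<in> L!j" using op_cover q by blast
    have "(i,j,y) \<in> grp L" using i j unfolding grp_def by auto
    moreover have "q \<in> blk L (i,j,y)" using i j q unfolding blk_def by auto
    ultimately show "q \<in> (\<Union>g\<in>grp L. blk L g)" by blast
  qed
qed

lemma blk_dj: "disjoint_family_on (blk L) (grp L)"
  unfolding disjoint_family_on_def
proof (intro ballI impI)
  fix g g' assume g: "g \<in> grp L" "g' \<in> grp L" "g \<noteq> g'"
  obtain i j y where gg: "g = (i,j,y)" by (cases g) auto
  obtain i' j' y' where gg': "g' = (i',j',y')" by (cases g') auto
  show "blk L g \<inter> blk L g' = {}"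
  proof (cases "y = y'")
    case True
    then have "j = j'" using g gg gg' op_uniq unfolding grp_def by auto
    then have "i \<noteq> i'" using g gg gg' True by auto
    then show ?thesis using g gg gg' op_dj unfolding blk_def grp_def by auto
  next
    case False then show ?thesis using gg gg' unfolding blk_def by auto
  qed
qed

lemma hh_restrict: "g \<in> grp L \<Longrightarrow> hh p L g (E \<inter> blk L g) = hh p L g E"
proof -
  assume "g \<in> grp L"
  obtain i j y where gg: "g = (i,j,y)" by (cases g) auto
  have 1: "(\<Prod>x\<in>L!i. pair_factor p (E \<inter> blk L (i,j,y)) i j x y) = (\<Prod>x\<in>L!i. pair_factor p E i j x y)"
    by (rule prod.cong) (auto simp: pair_factor_def blk_def gg)
  have 2: "{x \<in> L!i. (x, y) \<in> E \<inter> blk L (i,j,y)} = {x \<in> L!i. (x, y) \<in> E}"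
    by (auto simp: blk_def gg)
  have 3: "inneighbour_factor p (E \<inter> blk L (i,j,y)) (L!i) y = inneighbour_factor p E (L!i) y"
    unfolding inneighbour_factor_def 2 ..
  show ?thesis by (simp only: hh_def gg prod.case 1 3)
qed

lemma prod_grp: "(\<Prod>g\<in>grp L. F g) = (\<Prod>i<length L. \<Prod>j<length L. \<Prod>y\<in>L!j. F (i,j,y))"
proof -
  have "(\<Prod>i<length L. \<Prod>j<length L. \<Prod>y\<in>L!j. F (i,j,y))
      = (\<Prod>i<length L. \<Prod>(j,y)\<in>(SIGMA j:{..<length L}. L!j). F (i,j,y))"
    using op_fin by (intro prod.cong refl, subst prod.Sigma) auto
  also have "\<dots> = (\<Prod>(i,jy)\<in>(SIGMA i:{..<length L}. SIGMA j:{..<length L}. L!j). F (i,jy))"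
    using op_fin by (subst prod.Sigma) (auto simp: case_prod_unfold)
  finally show ?thesis unfolding grp_def by (simp add: case_prod_unfold)
qed

lemma law_factor: "layered_edge_law p L E = (\<Prod>g\<in>grp L. hh p L g (E \<inter> blk L g))"
proof -
  let ?k = "length L"
  have "(\<Prod>g\<in>grp L. hh p L g (E \<inter> blk L g)) = (\<Prod>g\<in>grp L. hh p L g E)"
    by (rule prod.cong) (auto simp: hh_restrict)
  also have "\<dots> = (\<Prod>i<?k. \<Prod>j<?k. \<Prod>y\<in>L!j. hh p L (i,j,y) E)" by (rule prod_grp)
  also have "\<dots> = (\<Prod>i<?k. \<Prod>j<?k. \<Prod>y\<in>L!j. \<Prod>x\<in>L!i. pair_factor p E i j x y) *
      (\<Prod>i<?k. \<Prod>j<?k. \<Prod>y\<in>L!j. (if j = Suc i then inneighbour_factor p E (L!i) y else 1))"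
    by (simp add: hh_def prod.distrib)
  also have "(\<Prod>i<?k. \<Prod>j<?k. \<Prod>y\<in>L!j. \<Prod>x\<in>L!i. pair_factor p E i j x y)
      = (\<Prod>i<?k. \<Prod>j<?k. \<Prod>x\<in>L!i. \<Prod>y\<in>L!j. pair_factor p E i j x y)"
    by (rule prod.cong[OF refl], rule prod.cong[OF refl], rule prod.swap)
  also have "(\<Prod>i<?k. \<Prod>j<?k. \<Prod>y\<in>L!j. (if j = Suc i then inneighbour_factor p E (L!i) y else 1))
      = (\<Prod>i<?k. (if Suc i < ?k then \<Prod>y\<in>L!Suc i. inneighbour_factor p E (L!i) y else 1))"
  proof (rule prod.cong[OF refl])
    fix i
    have "(\<Prod>j<?k. \<Prod>y\<in>L!j. (if j = Suc i then inneighbour_factor p E (L!i) y else 1))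
        = (\<Prod>j<?k. (if j = Suc i then \<Prod>y\<in>L!j. inneighbour_factor p E (L!i) y else 1))"
      by (rule prod.cong) auto
    also have "\<dots> = (if Suc i < ?k then \<Prod>y\<in>L!Suc i. inneighbour_factor p E (L!i) y else 1)"
      by (subst prod.delta) auto
    finally show "(\<Prod>j<?k. \<Prod>y\<in>L!j. (if j = Suc i then inneighbour_factor p E (L!i) y else 1))
        = (if Suc i < ?k then \<Prod>y\<in>L!Suc i. inneighbour_factor p E (L!i) y else 1)" .
  qed
  also have "\<dots> = (\<Prod>i<?k - 1. \<Prod>y\<in>L!(i+1). inneighbour_factor p E (L!i) y)"
  proof -
    have "{..<?k} \<inter> {i. Suc i < ?k} = {..<?k - 1}" by auto
    then show ?thesis by (subst prod.If_cases) auto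
  qed
  finally show ?thesis unfolding layered_edge_law_def by simp
qed

lemma pow_key:
  fixes w :: real
  assumes "w > 0" "s \<le> m"
  shows "(w/(1+w))^s * (1 - w/(1+w))^(m-s) = w^s * (1/(1+w))^m"
proof -
  have q: "1 - w/(1+w) = 1/(1+w)" using assms by (simp add: field_simps)
  have "(w/(1+w))^s = w^s * (1/(1+w))^s" by (simp add: power_divide)
  moreover have "(1/(1+w))^s * (1/(1+w))^(m-s) = (1/(1+w))^m"
    using assms(2) by (simp add: power_add[symmetric])
  ultimately show ?thesis unfolding q by (simp add: mult.assoc)
qed

lemma hh_form:
  assumes w: "w > 0" and g: "g \<in> grp L" and T: "T \<subseteq> blk L g"
  shows "hh (w/(1+w)) L g T = (if cnd g T then w ^ card T * cc w L g else 0)"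
proof -
  obtain i j y where gg: "g = (i,j,y)" by (cases g) auto
  have ij: "i < length L" "j < length L" "y \<in> L!j" using g gg unfolding grp_def by auto
  define p where "p = w/(1+w)"
  define S where "S = {x \<in> L!i. (x,y) \<in> T}"
  define m where "m = card (L!i)"
  have TB: "T \<subseteq> L!i \<times> {y}" using T gg unfolding blk_def by simp
  have TS: "T = (\<lambda>x. (x,y)) ` S" using TB unfolding S_def by auto
  have cTS: "card T = card S" unfolding TS by (rule card_image) (auto simp: inj_on_def)
  have TSe: "(T = {}) = (S = {})" unfolding TS by simp
  have finS: "finite (L!i)" using op_fin ij by simp
  have Sm: "card S \<le> m" unfolding m_def S_def using finS by (intro card_mono) auto
  have cdiff: "card (L!i \<inter> - {x. (x,y) \<in> T}) = m - card S"
  proof -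
    have "L!i \<inter> - {x. (x,y) \<in> T} = L!i - S" unfolding S_def by auto
    then show ?thesis unfolding m_def using finS by (simp add: card_Diff_subset S_def)
  qed
  have cS: "L!i \<inter> {x. (x,y) \<in> T} = S" unfolding S_def by auto
  show ?thesis
  proof (cases "j \<le> i")
    case True
    have "hh p L g T = (\<Prod>x\<in>L!i. if (x,y) \<in> T then 0 else 1)"
      unfolding hh_def gg using True by (simp add: pair_factor_def)
    also have "\<dots> = (if S = {} then 1 else 0)"
    proof (cases "S = {}")
      case True then show ?thesis unfolding S_def by (intro trans[OF prod.neutral]) auto
    next
      case False
      then obtain x where "x \<in> L!i" "(x,y) \<in> T" unfolding S_def by auto
      then show ?thesis using False finS by (subst prod_zero) auto
    qed
    finally show ?thesis using True TSe unfolding p_def cnd_def cc_def gg by auto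
  next
    case False
    show ?thesis
    proof (cases "j = Suc i")
      case True
      have "hh p L g T = inneighbour_factor p T (L!i) y"
        unfolding hh_def gg using True by (simp add: pair_factor_def)
      also have "\<dots> = (if S = {} then 0 else p ^ card S * (1-p)^(m - card S) / (1 - (1-p)^m))"
        unfolding inneighbour_factor_def Let_def S_def m_def by simp
      also have "\<dots> = (if S = {} then 0 else w ^ card S * (1/(1+w))^m / (1 - (1/(1+w))^m))"
        using pow_key[OF w Sm] w unfolding p_def by (simp add: field_simps)
      finally show ?thesis using True TSe cTS unfolding p_def cnd_def cc_def gg m_def by auto
    next
      case False2: False
      have "hh p L g T = (\<Prod>x\<in>L!i. if (x,y) \<in> T then p else 1 - p)"
        unfolding hh_def gg using False False2 by (simp add: pair_factor_def)
      also have "\<dots> = p ^ card S * (1-p)^(m - card S)"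
        using finS by (simp add: prod.If_cases cS cdiff)
      also have "\<dots> = w ^ card S * (1/(1+w))^m" unfolding p_def by (rule pow_key[OF w Sm])
      finally show ?thesis using False False2 TSe cTS unfolding p_def cnd_def cc_def gg m_def by auto
    qed
  qed
qed

lemma pow_sum: "finite B \<Longrightarrow> (\<Sum>T\<in>Pow B. (w::real) ^ card T) = (1+w) ^ card B"
  using prod_add[of B "\<lambda>_. w" "\<lambda>_. 1"] by (simp add: add.commute)

lemma hh_sum:
  assumes w: "w > 0" and g: "g \<in> grp L"
  shows "(\<Sum>T\<in>Pow (blk L g). hh (w/(1+w)) L g T) = 1"
proof -
  obtain i j y where gg: "g = (i,j,y)" by (cases g) auto
  have ij: "i < length L" "j < length L" "y \<in> L!j" using g gg unfolding grp_def by auto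
  define B where "B = blk L g"
  define m where "m = card (L!i)"
  define c where "c = cc w L g"
  have finB: "finite B" unfolding B_def using blk_fin g by simp
  have cB: "card B = m" unfolding B_def blk_def gg m_def by (simp add: card_cartesian_product)
  have m1: "m \<ge> 1" unfolding m_def using op_fin op_ne ij by (simp add: Suc_leI card_gt_0_iff)
  have PS: "(\<Sum>T\<in>Pow B. w ^ card T) = (1+w)^m" using pow_sum[OF finB] cB by simp
  have "(\<Sum>T\<in>Pow B. hh (w/(1+w)) L g T) = (\<Sum>T\<in>Pow B. if cnd g T then w ^ card T * c else 0)"
    using hh_form[OF w g] unfolding B_def c_def by (intro sum.cong) auto
  also have "\<dots> = 1"
  proof (cases "j \<le> i")
    case True
    then have "(\<Sum>T\<in>Pow B. if cnd g T then w ^ card T * c else 0) = (\<Sum>T\<in>Pow B. if T = {} then w ^ card T * c else 0)"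
      unfolding cnd_def gg by (intro sum.cong) auto
    also have "\<dots> = c" using finB by (subst sum.delta) auto
    finally show ?thesis using True unfolding c_def cc_def gg by simp
  next
    case False
    show ?thesis
    proof (cases "j = Suc i")
      case True
      have split: "(\<Sum>T\<in>Pow B. w ^ card T * c) = (\<Sum>T\<in>Pow B. if T \<noteq> {} then w ^ card T * c else 0)
          + (\<Sum>T\<in>Pow B. if T = {} then w ^ card T * c else 0)"
        by (subst sum.distrib[symmetric]) (intro sum.cong, auto)
      have "(\<Sum>T\<in>Pow B. if T = {} then w ^ card T * c else 0) = c"
        using finB by (subst sum.delta) auto
      moreover have "(\<Sum>T\<in>Pow B. w ^ card T * c) = (1+w)^m * c"
        using PS by (simp add: sum_distrib_right[symmetric])
      ultimately have "(\<Sum>T\<in>Pow B. if T \<noteq> {} then w ^ card T * c else 0) = ((1+w)^m - 1) * c"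
        using split by (simp add: algebra_simps)
      moreover have "(\<Sum>T\<in>Pow B. if cnd g T then w ^ card T * c else 0) = (\<Sum>T\<in>Pow B. if T \<noteq> {} then w ^ card T * c else 0)"
        using True unfolding cnd_def gg by (intro sum.cong) auto
      moreover have "((1+w)^m - 1) * c = 1"
      proof -
        have X: "(1+w)^m > 1" using w m1 by (intro one_less_power) auto
        have "c = (1/(1+w))^m / (1 - (1/(1+w))^m)" unfolding c_def cc_def gg m_def using True by simp
        also have "\<dots> = 1 / ((1+w)^m - 1)" using X w by (simp add: power_divide field_simps)
        finally show ?thesis using X by simp
      qed
      ultimately show ?thesis by simp
    next
      case False2: False
      have "(\<Sum>T\<in>Pow B. if cnd g T then w ^ card T * c else 0) = (\<Sum>T\<in>Pow B. w ^ card T * c)"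
        using False False2 unfolding cnd_def gg by (intro sum.cong) auto
      also have "\<dots> = (1+w)^m * c" using PS by (simp add: sum_distrib_right[symmetric])
      also have "\<dots> = 1"
      proof -
        have "c = (1/(1+w))^m" unfolding c_def cc_def gg m_def using False False2 by simp
        then show ?thesis using w by (simp add: power_divide)
      qed
      finally show ?thesis .
    qed
  qed
  finally show ?thesis unfolding B_def .
qed

lemma law_sum:
  assumes "w > 0"
  shows "(\<Sum>E\<in>Pow ({1..n} \<times> {1..n}). layered_edge_law (w/(1+w)) L E) = 1"
proof -
  have "(\<Sum>E\<in>Pow ({1..n} \<times> {1..n}). layered_edge_law (w/(1+w)) L E)
      = (\<Sum>E\<in>Pow (\<Union>g\<in>grp L. blk L g). \<Prod>g\<in>grp L. hh (w/(1+w)) L g (E \<inter> blk L g))"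
    unfolding blk_un by (simp add: law_factor)
  also have "\<dots> = (\<Prod>g\<in>grp L. \<Sum>T\<in>Pow (blk L g). hh (w/(1+w)) L g T)"
    by (rule group_sum[OF grp_fin blk_fin blk_dj])
  also have "\<dots> = 1" using hh_sum[OF assms] by simp
  finally show ?thesis .
qed

lemma cnd_iff:
  assumes "E \<subseteq> {1..n} \<times> {1..n}"
  shows "(\<forall>g\<in>grp L. cnd g (E \<inter> blk L g)) \<longleftrightarrow> layer_ok E L"
proof
  assume A: "\<forall>g\<in>grp L. cnd g (E \<inter> blk L g)"
  have a: "(x,y) \<notin> E" if "i < length L" "j < length L" "i \<le> j" "y \<in> L!i" "x \<in> L!j" for i j x y
  proof -
    have "(j,i,y) \<in> grp L" using that unfolding grp_def by auto
    then have "cnd (j,i,y) (E \<inter> blk L (j,i,y))" using A by blast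
    then have "E \<inter> (L!j \<times> {y}) = {}" using that unfolding cnd_def blk_def by auto
    then show ?thesis using that by auto
  qed
  have b: "\<exists>x\<in>L!i. (x,y) \<in> E" if "Suc i < length L" "y \<in> L!Suc i" for i y
  proof -
    have "(i,Suc i,y) \<in> grp L" using that unfolding grp_def by auto
    then have "cnd (i,Suc i,y) (E \<inter> blk L (i,Suc i,y))" using A by blast
    then have "E \<inter> (L!i \<times> {y}) \<noteq> {}" unfolding cnd_def blk_def by auto
    then show ?thesis by auto
  qed
  show "layer_ok E L" unfolding layer_ok_def using a b by blast
next
  assume ok: "layer_ok E L"
  show "\<forall>g\<in>grp L. cnd g (E \<inter> blk L g)"
  proof
    fix g assume g: "g \<in> grp L"
    obtain i j y where gg: "g = (i,j,y)" by (cases g) auto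
    have ij: "i < length L" "j < length L" "y \<in> L!j" using g gg unfolding grp_def by auto
    have 1: "E \<inter> (L!i \<times> {y}) = {}" if "j \<le> i"
      using ok ij that unfolding layer_ok_def by blast
    have 2: "E \<inter> (L!i \<times> {y}) \<noteq> {}" if "j = Suc i"
      using ok ij that unfolding layer_ok_def by blast
    show "cnd g (E \<inter> blk L g)" unfolding cnd_def blk_def gg using 1 2 by auto
  qed
qed

lemma layering_iff:
  assumes "E \<subseteq> {1..n} \<times> {1..n}"
  shows "root_layering (n, E) = L \<longleftrightarrow> layer_ok E L"
proof
  assume "root_layering (n, E) = L"
  then show "layer_ok E L" unfolding root_layering_def using lay_props op_set by (metis fst_conv snd_conv)
next
  assume ok: "layer_ok E L"
  have "layering_fuel E (\<Union>i\<in>{0..<length L}. L!i) n = drop 0 L"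
    using lay_build[OF ok _ op_dj, of 0 n] op_ne op_len by simp
  then show "root_layering (n, E) = L" unfolding root_layering_def op_union by simp
qed

lemma ok_acyclic:
  assumes ok: "layer_ok E L" and E: "E \<subseteq> {1..n} \<times> {1..n}"
  shows "acyclic E"
proof -
  have okA: "(x,y) \<notin> E" if "i < length L" "j < length L" "i \<le> j" "y \<in> L!i" "x \<in> L!j" for i j x y
    using ok that unfolding layer_ok_def by blast
  have cl: "\<forall>a b. a < length L \<longrightarrow> b < length L \<longrightarrow> x \<in> L!a \<longrightarrow> y \<in> L!b \<longrightarrow> a < b"
    if "(x,y) \<in> E\<^sup>+" for x y
    using that
  proof (induction rule: trancl_induct)
    case (base y)
    show ?case
    proof (intro allI impI)
      fix a b assume h: "a < length L" "b < length L" "x \<in> L!a" "y \<in> L!b"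
      show "a < b"
      proof (rule ccontr)
        assume "\<not> a < b"
        then have "b \<le> a" by simp
        then have "(x,y) \<notin> E" using okA[of b a y x] h by blast
        then show False using base by simp
      qed
    qed
  next
    case (step y z)
    show ?case
    proof (intro allI impI)
      fix a c assume h: "a < length L" "c < length L" "x \<in> L!a" "z \<in> L!c"
      have "y \<in> {1..n}" using step(2) E by auto
      then obtain b where b: "b < length L" "y \<in> L!b" using op_cover by blast
      have "a < b" using step(3) h(1,3) b by blast
      moreover have "b < c"
      proof (rule ccontr)
        assume "\<not> b < c"
        then have "c \<le> b" by simp
        then have "(y,z) \<notin> E" using okA[of c b z y] h b by blast
        then show False using step(2) by simp
      qed
      ultimately show "a < c" by simp
    qed
  qed
  show ?thesis unfolding acyclic_def
  proof
    fix x show "(x,x) \<notin> E\<^sup>+"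
    proof
      assume xx: "(x,x) \<in> E\<^sup>+"
      from tranclD[OF xx] obtain y where "(x,y) \<in> E" by blast
      then have "x \<in> {1..n}" using E by auto
      then obtain a where a: "a < length L" "x \<in> L!a" using op_cover by blast
      have "a < a" using cl[OF xx, rule_format, of a a] a by simp
      then show False by simp
    qed
  qed
qed

lemma dag_n:
  assumes "(n', E') \<in> labelled_dags" "root_layering (n', E') = L"
  shows "n' = n"
proof -
  have E': "E' \<subseteq> {1..n'} \<times> {1..n'}" "acyclic E'" using assms(1) unfolding labelled_dags_def by auto
  have "finite E'" using E'(1) finite_subset by blast
  then have "\<Union> (set (layering_fuel E' {1..n'} n')) = {1..n'}"
    using lay_cover E'(2) by simp
  moreover have "layering_fuel E' {1..n'} n' = L" using assms(2) unfolding root_layering_def by simp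
  ultimately have "{1..n'} = {1..n}" using op_set by metis
  then have "n' = n \<or> (\<not> 1 \<le> n' \<and> \<not> 1 \<le> n)" by (simp only: Icc_eq_Icc) blast
  then show ?thesis by linarith
qed

end
theorem lemma4:
  fixes z w :: real and n :: nat and L :: "nat set list" and E :: "(nat \<times> nat) set"
  assumes "z > 0" and "w > 0"
    and "DAG_finite z w"
    and "ordered_partition n L"
    and "E \<subseteq> {1..n} \<times> {1..n}"
  shows "(if root_layering (n, E) = L then boltzmann_prob z w (n, E) else 0)
           / boltzmann_event z w (\<lambda>G. root_layering G = L)
         = layered_edge_law (w / (1 + w)) L E"
proof -
  note op = assms(4)
  define p where "p = w/(1+w)"
  define P where "P = {1..n} \<times> {1..n}"
  define K where "K = (\<Prod>g\<in>grp L. cc w L g)"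
  have lawform: "layered_edge_law p L E' = (if layer_ok E' L then w ^ card E' * K else 0)"
    if E': "E' \<subseteq> P" for E'
  proof -
    have "layered_edge_law p L E' = (\<Prod>g\<in>grp L. hh p L g (E' \<inter> blk L g))"
      by (rule law_factor[OF op])
    also have "\<dots> = (\<Prod>g\<in>grp L. if cnd g (E' \<inter> blk L g) then w ^ card (E' \<inter> blk L g) * cc w L g else 0)"
      unfolding p_def by (intro prod.cong refl hh_form[OF op assms(2)]) auto
    also have "\<dots> = (if \<forall>g\<in>grp L. cnd g (E' \<inter> blk L g) then w ^ card E' * K else 0)"
      unfolding K_def
      by (rule group_prod[OF grp_fin[OF op] blk_fin[OF op] blk_dj[OF op]]) (use E' blk_un[OF op] P_def in auto)
    also have "\<dots> = (if layer_ok E' L then w ^ card E' * K else 0)"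
      using cnd_iff[OF op] E' P_def by simp
    finally show ?thesis .
  qed
  define Ev where "Ev = {E' \<in> Pow P. layer_ok E' L}"
  have finP: "finite (Pow P)" unfolding P_def by simp
  have finEv: "finite Ev" unfolding Ev_def using finP by simp
  define W where "W = (\<Sum>E'\<in>Ev. w ^ card E')"
  have KW: "K * W = 1"
  proof -
    have "1 = (\<Sum>E'\<in>Pow P. layered_edge_law p L E')"
      using law_sum[OF op assms(2)] unfolding p_def P_def by simp
    also have "\<dots> = (\<Sum>E'\<in>Pow P. if layer_ok E' L then w ^ card E' * K else 0)"
      using lawform by (intro sum.cong) auto
    also have "\<dots> = (\<Sum>E'\<in>Ev. w ^ card E' * K)"
      unfolding Ev_def by (rule sym, rule sum.inter_filter[OF finP])
    also have "\<dots> = K * W" unfolding W_def by (simp add: sum_distrib_left mult.commute)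
    finally show ?thesis by simp
  qed
  define D where "D = DAG_gf z w"
  have D: "D > 0"
  proof -
    have w00: "dag_weight z w (0, {}) = 1" unfolding dag_weight_def by (simp add: binomial_eq_0)
    have in0: "(0, {}) \<in> labelled_dags" unfolding labelled_dags_def by (simp add: acyclic_def)
    have nn: "dag_weight z w G \<ge> 0" for G
      unfolding dag_weight_def using assms(1,2) by simp
    have "infsum (dag_weight z w) {(0,{})} \<le> infsum (dag_weight z w) labelled_dags"
      by (rule infsum_mono2) (use assms(3) in0 nn in \<open>auto simp: DAG_finite_def\<close>)
    then show ?thesis using w00 unfolding D_def DAG_gf_def by simp
  qed
  define C :: real where "C = (1+w)^(n choose 2) * fact n"
  have C: "C > 0" using assms(2) unfolding C_def by simp
  have setEq: "{G \<in> labelled_dags. root_layering G = L} = (\<lambda>E'. (n,E')) ` Ev"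
  proof
    show "{G \<in> labelled_dags. root_layering G = L} \<subseteq> (\<lambda>E'. (n,E')) ` Ev"
    proof
      fix G assume G: "G \<in> {G \<in> labelled_dags. root_layering G = L}"
      obtain n' E' where GG: "G = (n',E')" by (cases G) auto
      have nn: "n' = n" using dag_n[OF op] G GG by blast
      have E'P: "E' \<subseteq> P" using G GG nn unfolding labelled_dags_def P_def by auto
      have "layer_ok E' L" using layering_iff[OF op] E'P G GG nn unfolding P_def by auto
      then show "G \<in> (\<lambda>E'. (n,E')) ` Ev" using GG nn E'P unfolding Ev_def by auto
    qed
  next
    show "(\<lambda>E'. (n,E')) ` Ev \<subseteq> {G \<in> labelled_dags. root_layering G = L}"
    proof
      fix G assume "G \<in> (\<lambda>E'. (n,E')) ` Ev"
      then obtain E' where GG: "G = (n,E')" "E' \<subseteq> P" "layer_ok E' L" unfolding Ev_def by auto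
      have "root_layering (n,E') = L" using layering_iff[OF op] GG unfolding P_def by auto
      moreover have "acyclic E'" using ok_acyclic[OF op] GG unfolding P_def by auto
      ultimately show "G \<in> {G \<in> labelled_dags. root_layering G = L}"
        using GG unfolding labelled_dags_def P_def by auto
    qed
  qed
  have probE: "boltzmann_prob z w (n,E') = z^n * w ^ card E' / (C * D)" if "E' \<in> Ev" for E'
  proof -
    have "(n,E') \<in> labelled_dags" using setEq that by blast
    then show ?thesis unfolding boltzmann_prob_def dag_weight_def C_def D_def by simp
  qed
  have ev: "boltzmann_event z w (\<lambda>G. root_layering G = L) = z^n * W / (C * D)"
  proof -
    have "boltzmann_event z w (\<lambda>G. root_layering G = L) = infsum (boltzmann_prob z w) ((\<lambda>E'. (n,E')) ` Ev)"
      unfolding boltzmann_event_def setEq ..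
    also have "\<dots> = (\<Sum>E'\<in>Ev. boltzmann_prob z w (n,E'))"
      using finEv by (simp add: sum.reindex inj_on_def)
    also have "\<dots> = (\<Sum>E'\<in>Ev. z^n * w ^ card E' / (C * D))"
      by (rule sum.cong[OF refl]) (rule probE)
    also have "\<dots> = z^n * W / (C * D)" unfolding W_def
      by (simp add: sum_divide_distrib[symmetric] sum_distrib_left[symmetric])
    finally show ?thesis .
  qed
  show ?thesis
  proof (cases "root_layering (n, E) = L")
    case True
    have ok: "layer_ok E L" using layering_iff[OF op assms(5)] True by simp
    have EEv: "E \<in> Ev" using ok assms(5) unfolding Ev_def P_def by simp
    have law: "layered_edge_law (w/(1+w)) L E = w ^ card E * K"
      using lawform[of E] ok assms(5) unfolding P_def p_def by simp
    have zn: "z^n > 0" using assms(1) by simp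
    have W0: "W \<noteq> 0" using KW by auto
    have K: "K = 1 / W" using KW W0 by (simp add: field_simps)
    show ?thesis unfolding law ev using True probE[OF EEv] zn W0 C D K assms(1) by (simp add: field_simps)
  next
    case False
    have "\<not> layer_ok E L" using layering_iff[OF op assms(5)] False by simp
    then have "layered_edge_law (w/(1+w)) L E = 0"
      using lawform[of E] assms(5) unfolding P_def p_def by simp
    then show ?thesis using False by simp
  qed
qed

end
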